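(* For every $\alpha>0$ there exists a choice of $\beta>0$ such that Primal Online Balanced Descent (with $\ell_2$ norm and Euclidean projection) has competitive ratio at most $3+O(1/\alpha)$ for SOCO with $\ell_2$ switching costs when all cost functions are locally $\alpha$-polyhedral. More generally, let $\|\cdot\|$ be an arbitrary norm on $\mathbb{R}^d$ and let $k_1,k_2>0$ be constants with $k_1\|x\|\le\|x\|_2\le k_2\|x\|$ for all $x$; then there exists a choice of $\beta$ such that the algorithm has competitive ratio at most $\frac{\max\{k_2,1\}}{\min\{k_1,1\}}\left(3+O(1/\alpha)\right)$ when run on locally $\alpha$-polyhedral cost functions with switching cost $\|\cdot\|$.
   Context: SOCO: a convex decision set $\mathcal{X}\subseteq\mathbb{R}^d$, a norm $\|\cdot\|$ (switching cost), a starting point $x_0$, and non-negative convex cost functions $f_1,\dots,f_T$ ($f_t=+\infty$ outside $\mathcal{X}$). At round $t$ the algorithm observes $f_t$, then chooses $x_t\in\mathcal{X}$, paying $f_t(x_t)+\|x_t-x_{t-1}\|$. $\mathrm{cost}(ALG)=\sum_t f_t(x_t)+\|x_t-x_{t-1}\|$; $\mathrm{cost}(OPT)$ is the minimum of the same expression over all $(x_1,\dots,x_T)\in\mathcal{X}^T$ chosen with full knowledge. An algorithm is $C$-competitive if $\mathrm{cost}(ALG)\le C\,\mathrm{cost}(OPT)$ for all cost sequences. A function $f_t$ with minimizer $v_t$ is locally $\alpha$-polyhedral w.r.t. a norm $\|\cdot\|$ if there is $\epsilon>0$ such that $f_t(x)-f_t(v_t)\ge\alpha\|x-v_t\|$ for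 all $x\in\mathcal{X}$ with $\|x-v_t\|\le\epsilon$. Primal Online Balanced Descent with parameter $\beta>0$, norm $\|\cdot\|$ and mirror map $\Phi$ (here $\Phi(x)=\frac12\|x\|_2^2$, so $\Pi^\Phi_K$ is Euclidean projection): for $t=1,\dots,T$: observe $f_t$, let $v_t=\arg\min_x f_t(x)$; if $\|x_{t-1}-v_t\|<\beta f_t(v_t)$ set $x_t=v_t$; otherwise, with $K^l_t=\{x:f_t(x)\le l\}$ and $x(l)=\Pi^\Phi_{K^l_t}(x_{t-1})$, increase $l$ until $\|x(l)-x_{t-1}\|=\beta l$ and set $x_t=x(l)$. Here $\Pi^\Phi_K(x)=\arg\min_{y\in K}D_\Phi(y,x)$ with $D_\Phi(x,y)=\Phi(x)-\Phi(y)-\nabla\Phi(y)^T(x-y)$. *)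

theory Defs
  imports "HOL-Analysis.Analysis"
begin

text \<open>Points of R^d are functions nat => real vanishing at every index >= d.
  This explicit encoding lets constants (the O(1/alpha) constant) be stated
  uniformly in the dimension d.\<close>

definition Rd :: "nat \<Rightarrow> (nat \<Rightarrow> real) set" where
  "Rd d = {x. \<forall>i\<ge>d. x i = 0}"

definition vadd :: "(nat \<Rightarrow> real) \<Rightarrow> (nat \<Rightarrow> real) \<Rightarrow> (nat \<Rightarrow> real)" where
  "vadd x y = (\<lambda>i. x i + y i)"

definition vsub :: "(nat \<Rightarrow> real) \<Rightarrow> (nat \<Rightarrow> real) \<Rightarrow> (nat \<Rightarrow> real)" where
  "vsub x y = (\<lambda>i. x i - y i)"

definition vscale :: "real \<Rightarrow> (nat \<Rightarrow> real) \<Rightarrow> (nat \<Rightarrow> real)" where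
  "vscale c x = (\<lambda>i. c * x i)"

definition l2 :: "nat \<Rightarrow> (nat \<Rightarrow> real) \<Rightarrow> real" where
  "l2 d x = sqrt (\<Sum>i<d. (x i)\<^sup>2)"

definition is_norm_on :: "nat \<Rightarrow> ((nat \<Rightarrow> real) \<Rightarrow> real) \<Rightarrow> bool" where
  "is_norm_on d N \<longleftrightarrow>
     (\<forall>x\<in>Rd d. 0 \<le> N x \<and> (N x = 0 \<longleftrightarrow> x = (\<lambda>i. 0))) \<and>
     (\<forall>x\<in>Rd d. \<forall>c. N (vscale c x) = \<bar>c\<bar> * N x) \<and>
     (\<forall>x\<in>Rd d. \<forall>y\<in>Rd d. N (vadd x y) \<le> N x + N y)"

definition convex_set :: "(nat \<Rightarrow> real) set \<Rightarrow> bool" where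
  "convex_set X \<longleftrightarrow>
     (\<forall>x\<in>X. \<forall>y\<in>X. \<forall>u::real. 0 \<le> u \<and> u \<le> 1 \<longrightarrow> vadd (vscale u x) (vscale (1 - u) y) \<in> X)"

definition convex_fun_on :: "(nat \<Rightarrow> real) set \<Rightarrow> ((nat \<Rightarrow> real) \<Rightarrow> real) \<Rightarrow> bool" where
  "convex_fun_on X f \<longleftrightarrow>
     (\<forall>x\<in>X. \<forall>y\<in>X. \<forall>u::real. 0 \<le> u \<and> u \<le> 1 \<longrightarrow>
        f (vadd (vscale u x) (vscale (1 - u) y)) \<le> u * f x + (1 - u) * f y)"

text \<open>Cost functions are given on X (they are +infinity outside X, which is
  modelled by restricting all decisions to X).\<close>

definition is_minimizer :: "(nat \<Rightarrow> real) set \<Rightarrow> ((nat \<Rightarrow> real) \<Rightarrow> real) \<Rightarrow> (nat \<Rightarrow> real) \<Rightarrow> bool" where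
  "is_minimizer X f v \<longleftrightarrow> v \<in> X \<and> (\<forall>x\<in>X. f v \<le> f x)"

definition locally_polyhedral ::
  "(nat \<Rightarrow> real) set \<Rightarrow> ((nat \<Rightarrow> real) \<Rightarrow> real) \<Rightarrow> real \<Rightarrow> ((nat \<Rightarrow> real) \<Rightarrow> real) \<Rightarrow> bool" where
  "locally_polyhedral X N \<alpha> f \<longleftrightarrow>
     (\<exists>v. is_minimizer X f v \<and>
        (\<exists>\<epsilon>>0. \<forall>x\<in>X. N (vsub x v) \<le> \<epsilon> \<longrightarrow> f x - f v \<ge> \<alpha> * N (vsub x v)))"

definition soco_cost ::
  "((nat \<Rightarrow> real) \<Rightarrow> real) \<Rightarrow> (nat \<Rightarrow> (nat \<Rightarrow> real) \<Rightarrow> real) \<Rightarrow> nat \<Rightarrow> (nat \<Rightarrow> nat \<Rightarrow> real) \<Rightarrow> real" where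
  "soco_cost N f T x = (\<Sum>t\<in>{1..T}. f t (x t) + N (vsub (x t) (x (t - 1))))"

definition soco_opt ::
  "(nat \<Rightarrow> real) set \<Rightarrow> ((nat \<Rightarrow> real) \<Rightarrow> real) \<Rightarrow> (nat \<Rightarrow> (nat \<Rightarrow> real) \<Rightarrow> real) \<Rightarrow> (nat \<Rightarrow> real) \<Rightarrow> nat \<Rightarrow> real" where
  "soco_opt X N f x0 T =
     Inf {soco_cost N f T y | y. y 0 = x0 \<and> (\<forall>t\<in>{1..T}. y t \<in> X)}"

definition euclid_proj :: "nat \<Rightarrow> (nat \<Rightarrow> real) set \<Rightarrow> (nat \<Rightarrow> real) \<Rightarrow> (nat \<Rightarrow> real) \<Rightarrow> bool" where
  "euclid_proj d K x y \<longleftrightarrow> y \<in> K \<and> (\<forall>z\<in>K. l2 d (vsub y x) \<le> l2 d (vsub z x))"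

text \<open>The level l at which ||x(l) - x_{t-1}|| = beta * l is unique (the left side
  is non-increasing in l, the right side strictly increasing), so the
  "increase l until" rule is captured by an existential.\<close>
definition pobd_run ::
  "nat \<Rightarrow> (nat \<Rightarrow> real) set \<Rightarrow> real \<Rightarrow> (nat \<Rightarrow> (nat \<Rightarrow> real) \<Rightarrow> real) \<Rightarrow> (nat \<Rightarrow> real) \<Rightarrow> nat
     \<Rightarrow> (nat \<Rightarrow> nat \<Rightarrow> real) \<Rightarrow> bool" where
  "pobd_run d X \<beta> f x0 T x \<longleftrightarrow> x 0 = x0 \<and>
     (\<forall>t\<in>{1..T}. \<exists>v. is_minimizer X (f t) v \<and>
        (if l2 d (vsub (x (t - 1)) v) < \<beta> * f t v then x t = v
         else (\<exists>l. euclid_proj d {y \<in> X. f t y \<le> l} (x (t - 1)) (x t)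
                   \<and> l2 d (vsub (x t) (x (t - 1))) = \<beta> * l)))"

end

theory Submission
  imports Defs
begin

lemma l2_L2: "l2 d x = L2_set x {..<d}"
  by (simp add: l2_def L2_set_def)

lemma D_nonneg: "0 \<le> l2 d x"
  by (simp add: l2_L2)

lemma D_sym: "l2 d (vsub a b) = l2 d (vsub b a)"
  unfolding l2_def vsub_def by (simp add: power2_commute)

lemma D_tri: "l2 d (vsub a c) \<le> l2 d (vsub a b) + l2 d (vsub b c)"
proof -
  have "vsub a c = (\<lambda>i. vsub a b i + vsub b c i)"
    by (auto simp: vsub_def)
  then show ?thesis unfolding l2_L2 by (simp add: L2_set_triangle_ineq)
qed

lemma D_scale:
  assumes "0 \<le> u"
  shows "l2 d (vsub (vadd (vscale u x) (vscale (1 - u) v)) v) = u * l2 d (vsub x v)"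
proof -
  have "vsub (vadd (vscale u x) (vscale (1 - u) v)) v = (\<lambda>i. u * vsub x v i)"
    by (auto simp: vsub_def vadd_def vscale_def algebra_simps)
  then show ?thesis unfolding l2_L2 by (metis L2_set_right_distrib[OF assms])
qed

lemma global_poly:
  assumes cf: "convex_fun_on X f" and cX: "convex_set X" and a: "0 < \<alpha>"
    and lp: "locally_polyhedral X (l2 d) \<alpha> f"
  obtains v where "is_minimizer X f v" "\<forall>z\<in>X. \<alpha> * l2 d (vsub z v) \<le> f z - f v"
proof -
  obtain v \<epsilon> where m: "is_minimizer X f v" and e: "\<epsilon> > 0"
    and loc: "\<forall>x\<in>X. l2 d (vsub x v) \<le> \<epsilon> \<longrightarrow> f x - f v \<ge> \<alpha> * l2 d (vsub x v)"
    using lp unfolding locally_polyhedral_def by blast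
  have vX: "v \<in> X" using m by (simp add: is_minimizer_def)
  have "\<alpha> * l2 d (vsub z v) \<le> f z - f v" if zX: "z \<in> X" for z
  proof (cases "l2 d (vsub z v) \<le> \<epsilon>")
    case True then show ?thesis using loc zX by auto
  next
    case False
    define Dz where "Dz = l2 d (vsub z v)"
    define u where "u = \<epsilon> / Dz"
    have Dpos: "Dz > 0" using False e Dz_def by simp
    have u0: "0 \<le> u" "u \<le> 1" using False e Dpos by (auto simp: u_def Dz_def)
    define w where "w = vadd (vscale u z) (vscale (1 - u) v)"
    have wX: "w \<in> X" using cX zX vX u0 unfolding convex_set_def w_def by blast
    have Dw: "l2 d (vsub w v) = \<epsilon>"
      unfolding w_def D_scale[OF u0(1)] using Dpos by (simp add: u_def Dz_def)
    have fw: "f w \<le> u * f z + (1 - u) * f v"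
      using cf zX vX u0 unfolding convex_fun_on_def w_def by blast
    have "\<alpha> * \<epsilon> \<le> f w - f v" using loc wX Dw by auto
    then have "\<alpha> * \<epsilon> \<le> u * (f z - f v)" using fw by (simp add: algebra_simps)
    then have "\<alpha> * \<epsilon> * Dz \<le> \<epsilon> * (f z - f v)" using Dpos
      by (simp add: u_def le_divide_eq mult.commute)
    then have "\<epsilon> * (\<alpha> * Dz) \<le> \<epsilon> * (f z - f v)" by (simp add: algebra_simps)
    then have "\<alpha> * Dz \<le> f z - f v" using e by simp
    then show ?thesis by (simp add: Dz_def)
  qed
  then show ?thesis using that m by blast
qed

lemma step_bound:
  fixes s :: real
  assumes s: "0 < s" and fnn: "\<forall>z\<in>X. 0 \<le> f z" and vX: "v \<in> X" and yX: "y \<in> X"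
    and glob: "\<forall>z\<in>X. l2 d (vsub z v) \<le> s * (f z - f v)"
    and mn: "\<forall>z\<in>X. f v \<le> f z"
    and st: "(b = v \<and> l2 d (vsub a v) < (1 + 8 * s) * f v) \<or>
             (\<exists>l. b \<in> X \<and> f b \<le> l \<and> l2 d (vsub b a) = (1 + 8 * s) * l)"
  shows "f b + l2 d (vsub b a) + 2 * l2 d (vsub b y) - 2 * l2 d (vsub a yp)
         \<le> (2 + 12 * s) * (f y + l2 d (vsub y yp))"
proof -
  have fv0: "0 \<le> f v" using fnn vX by auto
  have fy0: "0 \<le> f y" using fnn yX by auto
  have Dyv: "l2 d (vsub y v) \<le> s * f y - s * f v" using glob yX by (auto simp: algebra_simps)
  have Dyyp0: "0 \<le> l2 d (vsub y yp)" by (rule D_nonneg)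
  have Dayp0: "0 \<le> l2 d (vsub a yp)" by (rule D_nonneg)
  have sfv: "s * f v \<le> s * f y" using mn yX s by auto
  have sfv0: "0 \<le> s * f v" using s fv0 by auto
  have RHS: "(2 + 12 * s) * (f y + l2 d (vsub y yp)) = 2 * f y + 12 * (s * f y) + 2 * l2 d (vsub y yp)
     + 12 * (s * l2 d (vsub y yp))" by (simp add: algebra_simps)
  have sD: "0 \<le> s * l2 d (vsub y yp)" using s Dyyp0 by auto
  from st show ?thesis
  proof
    assume c1: "b = v \<and> l2 d (vsub a v) < (1 + 8 * s) * f v"
    have "l2 d (vsub v y) \<le> s * f y - s * f v" using Dyv D_sym by metis
    moreover have "l2 d (vsub v a) < f v + 8 * (s * f v)" using c1 D_sym[of d a v] by (simp add: algebra_simps)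
    moreover have "f v \<le> f y" using mn yX by auto
    ultimately show ?thesis using c1 RHS sD fy0 Dyyp0 Dayp0 sfv sfv0 by auto
  next
    assume "\<exists>l. b \<in> X \<and> f b \<le> l \<and> l2 d (vsub b a) = (1 + 8 * s) * l"
    then obtain l where bX: "b \<in> X" and fb: "f b \<le> l" and Dba: "l2 d (vsub b a) = l + 8 * (s * l)"
      by (auto simp: algebra_simps)
    have Dbv: "l2 d (vsub b v) \<le> s * l" using glob bX fv0 fb s
      by (smt (verit, ccfv_SIG) mult_left_mono)
    have Dby: "l2 d (vsub b y) \<le> l2 d (vsub b v) + l2 d (vsub y v)" using D_tri D_sym by metis
    show ?thesis
    proof (cases "f y \<le> l")
      case True
      have "l2 d (vsub y v) \<le> s * l" using Dyv True s sfv0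
        by (smt (verit, ccfv_SIG) mult_left_mono)
      moreover have "l2 d (vsub b a) \<le> l2 d (vsub b y) + l2 d (vsub y a)" by (rule D_tri)
      moreover have "l2 d (vsub y a) \<le> l2 d (vsub y yp) + l2 d (vsub yp a)" by (rule D_tri)
      moreover have "l2 d (vsub yp a) = l2 d (vsub a yp)" by (rule D_sym)
      ultimately show ?thesis using Dba Dbv Dby fb RHS sD fy0 Dyyp0 sfv sfv0 by linarith
    next
      case False
      have "s * l \<le> s * f y" using False s by auto
      then show ?thesis using Dba Dbv Dby Dyv fb False RHS sD fy0 Dyyp0 Dayp0 sfv sfv0 by linarith
    qed
  qed
qed

lemma step_at:
  assumes a: "0 < \<alpha>" and cX: "convex_set X"
    and cf: "convex_fun_on X (f t)" and fnn: "\<forall>z\<in>X. 0 \<le> f t z"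
    and lp: "locally_polyhedral X (l2 d) \<alpha> (f t)"
    and yX: "y \<in> X"
    and run: "\<exists>v. is_minimizer X (f t) v \<and>
        (if l2 d (vsub a v) < (1 + 8 / \<alpha>) * f t v then b = v
         else (\<exists>l. euclid_proj d {y \<in> X. f t y \<le> l} a b
                   \<and> l2 d (vsub b a) = (1 + 8 / \<alpha>) * l))"
  shows "f t b + l2 d (vsub b a) + 2 * l2 d (vsub b y) - 2 * l2 d (vsub a yp)
         \<le> (2 + 12 * (1 / \<alpha>)) * (f t y + l2 d (vsub y yp))"
proof -
  obtain v where mv: "is_minimizer X (f t) v" and rc: "(if l2 d (vsub a v) < (1 + 8 / \<alpha>) * f t v then b = v
         else (\<exists>l. euclid_proj d {y \<in> X. f t y \<le> l} a b
                   \<and> l2 d (vsub b a) = (1 + 8 / \<alpha>) * l))" using run by blast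
  obtain w where mw: "is_minimizer X (f t) w" and gw: "\<forall>z\<in>X. \<alpha> * l2 d (vsub z w) \<le> f t z - f t w"
    using global_poly[OF cf cX a lp] by blast
  have vX: "v \<in> X" and wX: "w \<in> X" using mv mw by (auto simp: is_minimizer_def)
  have fvw: "f t v = f t w" using mv mw vX wX unfolding is_minimizer_def by (meson order_antisym)
  have "\<alpha> * l2 d (vsub v w) \<le> 0" using gw vX fvw by auto
  then have Dvw: "l2 d (vsub w v) \<le> 0" using a D_sym[of d v w]
    by (simp add: mult_le_0_iff)
  have glob: "\<forall>z\<in>X. l2 d (vsub z v) \<le> (1 / \<alpha>) * (f t z - f t v)"
  proof
    fix z assume zX: "z \<in> X"
    have "l2 d (vsub z v) \<le> l2 d (vsub z w) + l2 d (vsub w v)" by (rule D_tri)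
    also have "\<dots> \<le> l2 d (vsub z w)" using Dvw by simp
    also have "\<dots> \<le> (1 / \<alpha>) * (f t z - f t v)"
      using gw zX a fvw by (simp add: pos_le_divide_eq mult.commute)
    finally show "l2 d (vsub z v) \<le> (1 / \<alpha>) * (f t z - f t v)" .
  qed
  have mn: "\<forall>z\<in>X. f t v \<le> f t z" using mv by (simp add: is_minimizer_def)
  have st: "(b = v \<and> l2 d (vsub a v) < (1 + 8 * (1 / \<alpha>)) * f t v) \<or>
             (\<exists>l. b \<in> X \<and> f t b \<le> l \<and> l2 d (vsub b a) = (1 + 8 * (1 / \<alpha>)) * l)"
  proof (cases "l2 d (vsub a v) < (1 + 8 / \<alpha>) * f t v")
    case True then show ?thesis using rc by simp
  next
    case False
    then obtain l where "euclid_proj d {y \<in> X. f t y \<le> l} a b"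
       and "l2 d (vsub b a) = (1 + 8 / \<alpha>) * l" using rc by auto
    then show ?thesis unfolding euclid_proj_def by auto
  qed
  show ?thesis
    by (rule step_bound[where X=X and v=v and f="f t"]) (use a fnn vX yX glob mn st in auto)
qed

lemma run_in_X:
  assumes "pobd_run d X \<beta> f x0 T x" "t \<in> {1..T}"
  shows "x t \<in> X"
proof -
  obtain v where mv: "is_minimizer X (f t) v" and rc: "(if l2 d (vsub (x (t - 1)) v) < \<beta> * f t v then x t = v
         else (\<exists>l. euclid_proj d {y \<in> X. f t y \<le> l} (x (t - 1)) (x t)
                   \<and> l2 d (vsub (x t) (x (t - 1))) = \<beta> * l))"
    using assms unfolding pobd_run_def by blast
  show ?thesis using mv rc unfolding is_minimizer_def euclid_proj_def by (auto split: if_splits)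
qed

lemma l2_comp:
  assumes a: "0 < \<alpha>" and cX: "convex_set X"
    and hf: "\<forall>t\<in>{1..T}. convex_fun_on X (f t) \<and> (\<forall>y\<in>X. 0 \<le> f t y) \<and>
                   locally_polyhedral X (l2 d) \<alpha> (f t)"
    and run: "pobd_run d X (1 + 8 / \<alpha>) f x0 T x"
    and y0: "y 0 = x0" and yX: "\<forall>t\<in>{1..T}. y t \<in> X"
  shows "soco_cost (l2 d) f T x + 2 * l2 d (vsub (x T) (y T))
         \<le> (2 + 12 * (1 / \<alpha>)) * soco_cost (l2 d) f T y"
  using hf run yX
proof (induction T)
  case 0
  then show ?case using y0 by (simp add: soco_cost_def pobd_run_def l2_def vsub_def)
next
  case (Suc T)
  have hf': "\<forall>t\<in>{1..T}. convex_fun_on X (f t) \<and> (\<forall>y\<in>X. 0 \<le> f t y) \<and>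
                   locally_polyhedral X (l2 d) \<alpha> (f t)" using Suc.prems(1) by auto
  have run': "pobd_run d X (1 + 8 / \<alpha>) f x0 T x" using Suc.prems(2) unfolding pobd_run_def by auto
  have yX': "\<forall>t\<in>{1..T}. y t \<in> X" using Suc.prems(3) by auto
  note IH = Suc.IH[OF hf' run' yX']
  have t1: "Suc T \<in> {1..Suc T}" by simp
  have stp: "f (Suc T) (x (Suc T)) + l2 d (vsub (x (Suc T)) (x T)) + 2 * l2 d (vsub (x (Suc T)) (y (Suc T)))
       - 2 * l2 d (vsub (x T) (y T))
         \<le> (2 + 12 * (1 / \<alpha>)) * (f (Suc T) (y (Suc T)) + l2 d (vsub (y (Suc T)) (y T)))"
  proof (rule step_at[where X=X])
    have "\<forall>t\<in>{1..Suc T}. \<exists>v. is_minimizer X (f t) v \<and>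
        (if l2 d (vsub (x (t - 1)) v) < (1 + 8 / \<alpha>) * f t v then x t = v
         else (\<exists>l. euclid_proj d {y \<in> X. f t y \<le> l} (x (t - 1)) (x t)
                   \<and> l2 d (vsub (x t) (x (t - 1))) = (1 + 8 / \<alpha>) * l))"
      using Suc.prems(2) unfolding pobd_run_def by blast
    from bspec[OF this t1]
    show "\<exists>v. is_minimizer X (f (Suc T)) v \<and>
        (if l2 d (vsub (x T) v) < (1 + 8 / \<alpha>) * f (Suc T) v then x (Suc T) = v
         else (\<exists>l. euclid_proj d {y \<in> X. f (Suc T) y \<le> l} (x T) (x (Suc T))
                   \<and> l2 d (vsub (x (Suc T)) (x T)) = (1 + 8 / \<alpha>) * l))" by (simp only: diff_Suc_1)
  qed (use a cX Suc.prems t1 in auto)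
  have e: "\<And>z. soco_cost (l2 d) f (Suc T) z = soco_cost (l2 d) f T z + (f (Suc T) (z (Suc T)) + l2 d (vsub (z (Suc T)) (z T)))"
    by (simp add: soco_cost_def)
  show ?case using IH stp unfolding e by (simp add: algebra_simps)
qed

lemma vsub_Rd: "a \<in> Rd d \<Longrightarrow> b \<in> Rd d \<Longrightarrow> vsub a b \<in> Rd d"
  by (simp add: Rd_def vsub_def)

lemma traj_Rd:
  fixes t T :: nat
  assumes "X \<subseteq> Rd d" "x0 \<in> Rd d" "z 0 = x0" "\<forall>t\<in>{1..T}. z t \<in> X" "t \<le> T"
  shows "z t \<in> Rd d"
proof (cases "t = 0")
  case True then show ?thesis using assms by simp
next
  case False then have "1 \<le> t" by linarith
  then have "t \<in> {1..T}" using assms by auto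
  then show ?thesis using assms by blast
qed

lemma cost_N_le:
  assumes XR: "X \<subseteq> Rd d" and x0R: "x0 \<in> Rd d" and z0: "z 0 = x0" and zX: "\<forall>t\<in>{1..T}. z t \<in> X"
    and nn: "\<forall>t\<in>{1..T}. \<forall>y\<in>X. 0 \<le> f t y"
    and nrm: "\<forall>y\<in>Rd d. k1 * N y \<le> l2 d y \<and> l2 d y \<le> k2 * N y"
    and isn: "is_norm_on d N" and k: "0 < k1" "0 < k2"
  shows "min k1 1 * soco_cost N f T z \<le> soco_cost (l2 d) f T z"
    and "soco_cost (l2 d) f T z \<le> max k2 1 * soco_cost N f T z"
    and "0 \<le> soco_cost N f T z"
proof -
  have R: "vsub (z t) (z (t - 1)) \<in> Rd d" if "t \<in> {1..T}" for t
    using that by (intro vsub_Rd traj_Rd[OF XR x0R z0 zX]) auto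
  have Nnn: "0 \<le> N (vsub (z t) (z (t - 1)))" if "t \<in> {1..T}" for t
    using isn R[OF that] unfolding is_norm_on_def by blast
  have fnn: "0 \<le> f t (z t)" if "t \<in> {1..T}" for t using nn zX that by blast
  show "min k1 1 * soco_cost N f T z \<le> soco_cost (l2 d) f T z"
    unfolding soco_cost_def sum_distrib_left
  proof (rule sum_mono)
    fix t assume t: "t \<in> {1..T}"
    have a: "min k1 1 * N (vsub (z t) (z (t - 1))) \<le> k1 * N (vsub (z t) (z (t - 1)))"
      using Nnn[OF t] by (simp add: mult_right_mono)
    have b: "min k1 1 * f t (z t) \<le> f t (z t)"
      by (rule mult_left_le_one_le) (use k fnn[OF t] in auto)
    show "min k1 1 * (f t (z t) + N (vsub (z t) (z (t - 1))))
          \<le> f t (z t) + l2 d (vsub (z t) (z (t - 1)))"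
      using a b nrm R[OF t] by (auto simp: algebra_simps)
  qed
  show "soco_cost (l2 d) f T z \<le> max k2 1 * soco_cost N f T z"
    unfolding soco_cost_def sum_distrib_left
  proof (rule sum_mono)
    fix t assume t: "t \<in> {1..T}"
    have a: "k2 * N (vsub (z t) (z (t - 1))) \<le> max k2 1 * N (vsub (z t) (z (t - 1)))"
      using Nnn[OF t] by (simp add: mult_right_mono)
    have b: "f t (z t) \<le> max k2 1 * f t (z t)" using fnn[OF t]
      by (simp add: mult_le_cancel_right1 le_max_iff_disj mult_right_mono)
    have c: "l2 d (vsub (z t) (z (t - 1))) \<le> k2 * N (vsub (z t) (z (t - 1)))"
      using nrm R[OF t] by blast
    show "f t (z t) + l2 d (vsub (z t) (z (t - 1)))
          \<le> max k2 1 * (f t (z t) + N (vsub (z t) (z (t - 1))))"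
      using a b c by (simp add: algebra_simps)
  qed
  show "0 \<le> soco_cost N f T z"
    unfolding soco_cost_def using Nnn fnn by (intro sum_nonneg) (simp add: add_nonneg_nonneg)
qed

theorem theorem7:
  shows "\<exists>C>0. \<forall>\<alpha>>0. \<exists>\<beta>>0.
    \<forall>(d::nat) (X::(nat \<Rightarrow> real) set) (x0::nat \<Rightarrow> real) (N::(nat \<Rightarrow> real) \<Rightarrow> real)
      (k1::real) (k2::real) (T::nat) (f::nat \<Rightarrow> (nat \<Rightarrow> real) \<Rightarrow> real) (x::nat \<Rightarrow> nat \<Rightarrow> real).
      X \<subseteq> Rd d \<and> convex_set X \<and> x0 \<in> Rd d \<and>
      is_norm_on d N \<and> 0 < k1 \<and> 0 < k2 \<and>
      (\<forall>y\<in>Rd d. k1 * N y \<le> l2 d y \<and> l2 d y \<le> k2 * N y) \<and>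
      (\<forall>t\<in>{1..T}. convex_fun_on X (f t) \<and> (\<forall>y\<in>X. 0 \<le> f t y) \<and>
                   locally_polyhedral X (l2 d) \<alpha> (f t)) \<and>
      pobd_run d X \<beta> f x0 T x
      \<longrightarrow> soco_cost N f T x
            \<le> (max k2 1 / min k1 1) * (3 + C / \<alpha>) * soco_opt X N f x0 T"
proof (rule exI[of _ "12::real"], intro conjI allI impI)
  show "(0::real) < 12" by simp
  fix \<alpha> :: real assume a: "0 < \<alpha>"
  show "\<exists>\<beta>>0.
    \<forall>(d::nat) (X::(nat \<Rightarrow> real) set) (x0::nat \<Rightarrow> real) (N::(nat \<Rightarrow> real) \<Rightarrow> real)
      (k1::real) (k2::real) (T::nat) (f::nat \<Rightarrow> (nat \<Rightarrow> real) \<Rightarrow> real) (x::nat \<Rightarrow> nat \<Rightarrow> real).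
      X \<subseteq> Rd d \<and> convex_set X \<and> x0 \<in> Rd d \<and>
      is_norm_on d N \<and> 0 < k1 \<and> 0 < k2 \<and>
      (\<forall>y\<in>Rd d. k1 * N y \<le> l2 d y \<and> l2 d y \<le> k2 * N y) \<and>
      (\<forall>t\<in>{1..T}. convex_fun_on X (f t) \<and> (\<forall>y\<in>X. 0 \<le> f t y) \<and>
                   locally_polyhedral X (l2 d) \<alpha> (f t)) \<and>
      pobd_run d X \<beta> f x0 T x
      \<longrightarrow> soco_cost N f T x
            \<le> (max k2 1 / min k1 1) * (3 + 12 / \<alpha>) * soco_opt X N f x0 T"
  proof (intro exI[of _ "1 + 8 / \<alpha>"] conjI allI impI)
    show "0 < 1 + 8 / \<alpha>" using a by (simp add: add_pos_nonneg)
    fix d X x0 N k1 k2 T f x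
    assume H: "X \<subseteq> Rd d \<and> convex_set X \<and> x0 \<in> Rd d \<and>
      is_norm_on d N \<and> 0 < k1 \<and> 0 < k2 \<and>
      (\<forall>y\<in>Rd d. k1 * N y \<le> l2 d y \<and> l2 d y \<le> k2 * N y) \<and>
      (\<forall>t\<in>{1..T}. convex_fun_on X (f t) \<and> (\<forall>y\<in>X. 0 \<le> f t y) \<and>
                   locally_polyhedral X (l2 d) \<alpha> (f t)) \<and>
      pobd_run d X (1 + 8 / \<alpha>) f x0 T x"
    then have XR: "X \<subseteq> Rd d" and cX: "convex_set X" and x0R: "x0 \<in> Rd d"
      and isn: "is_norm_on d N" and k: "0 < k1" "0 < k2"
      and nrm: "\<forall>y\<in>Rd d. k1 * N y \<le> l2 d y \<and> l2 d y \<le> k2 * N y"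
      and hf: "\<forall>t\<in>{1..T}. convex_fun_on X (f t) \<and> (\<forall>y\<in>X. 0 \<le> f t y) \<and>
                   locally_polyhedral X (l2 d) \<alpha> (f t)"
      and run: "pobd_run d X (1 + 8 / \<alpha>) f x0 T x" by auto
    have nn: "\<forall>t\<in>{1..T}. \<forall>y\<in>X. 0 \<le> f t y" using hf by blast
    have x0: "x 0 = x0" using run by (simp add: pobd_run_def)
    have xX: "\<forall>t\<in>{1..T}. x t \<in> X" using run_in_X[OF run] by blast
    define m where "m = min k1 1"
    define M where "M = max k2 1"
    define R where "R = 2 + 12 * (1 / \<alpha>)"
    have m0: "0 < m" using k by (simp add: m_def)
    have M0: "0 < M" by (simp add: M_def)
    have R0: "0 < R" using a by (simp add: R_def add_pos_nonneg)
    define S where "S = {soco_cost N f T y | y. y 0 = x0 \<and> (\<forall>t\<in>{1..T}. y t \<in> X)}"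
    have Sne: "S \<noteq> {}" using x0 xX unfolding S_def by blast
    have key: "m * soco_cost N f T x / (R * M) \<le> c" if cS: "c \<in> S" for c
    proof -
      obtain y where c: "c = soco_cost N f T y" and y0: "y 0 = x0" and yX: "\<forall>t\<in>{1..T}. y t \<in> X"
        using cS unfolding S_def by blast
      have "m * soco_cost N f T x \<le> soco_cost (l2 d) f T x"
        unfolding m_def by (rule cost_N_le(1)[OF XR x0R x0 xX nn nrm isn k])
      also have "\<dots> \<le> soco_cost (l2 d) f T x + 2 * l2 d (vsub (x T) (y T))"
        using D_nonneg by simp
      also have "\<dots> \<le> R * soco_cost (l2 d) f T y"
        unfolding R_def by (rule l2_comp[OF a cX hf run y0 yX])
      also have "\<dots> \<le> R * (M * soco_cost N f T y)"
        using cost_N_le(2)[OF XR x0R y0 yX nn nrm isn k] R0 unfolding M_def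
        by (simp add: mult_left_mono)
      finally show ?thesis using R0 M0 c by (simp add: divide_le_eq mult.commute mult.left_commute)
    qed
    have Sge0: "0 \<le> c" if "c \<in> S" for c
      using that cost_N_le(3)[OF XR x0R _ _ nn nrm isn k] unfolding S_def by blast
    have I: "m * soco_cost N f T x / (R * M) \<le> Inf S" by (rule cInf_greatest[OF Sne key])
    have I0: "0 \<le> Inf S" by (rule cInf_greatest[OF Sne Sge0])
    have "soco_cost N f T x \<le> (M / m) * R * Inf S"
      using I m0 M0 R0 by (simp add: divide_le_eq field_simps)
    also have "\<dots> \<le> (M / m) * (3 + 12 / \<alpha>) * Inf S"
      using I0 m0 M0 a unfolding R_def
      by (intro mult_right_mono mult_left_mono) auto
    finally show "soco_cost N f T x \<le> (max k2 1 / min k1 1) * (3 + 12 / \<alpha>) * soco_opt X N f x0 T"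
      unfolding soco_opt_def S_def[symmetric] M_def m_def .
  qed
qed

end
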